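(* Let $f:[-1,1]\to\mathbb{R}$ be continuous and non-decreasing such that $\kappa(\boldsymbol{x},\boldsymbol{y})=f(\langle\boldsymbol{x},\boldsymbol{y}\rangle/n)$ is a valid (positive semidefinite) kernel on $\{-1,+1\}^n$. Let $\mathcal{U}=\{\boldsymbol{u}^1,\ldots,\boldsymbol{u}^p\}\subset\{-1,+1\}^n$ be such that the real $p\times p$ matrix $C$ with entries $c_{\eta\xi}=f(\langle\boldsymbol{u}^\xi,\boldsymbol{u}^\eta\rangle/n)$ is invertible, and let $\rho>0$. The recurrent kernel associative memory (RKAM) is defined as follows: for each $i=1,\ldots,n$, let $\boldsymbol{\beta}_i=(\beta_i^1,\ldots,\beta_i^p)$ be the solution of $$\min\; Q(\boldsymbol{\beta}_i)=\tfrac12\sum_{\xi,\eta=1}^p\beta_i^\xi\beta_i^\eta u_i^\xi u_i^\eta\kappa(\boldsymbol{u}^\xi,\boldsymbol{u}^\eta)-\sum_{\xi=1}^p\beta_i^\xi\quad\text{subject to } 0\le\beta_i^\xi\le\rho,\ \xi=1,\ldots,p,$$ and the state evolves by $x_i(t+1)=\mathrm{sgn}\big(\sum_{\xi=1}^p\beta_i^\xi u_i^\xi\kappa(\boldsymbol{u}^\xi,\boldsymbol{x}(t))\big)$. The bipolar recurrent projection neural network (RPNN) is defined as follows: with $c^{-1}_{\eta\xi}$ the entries of $C^{-1}$, set $v_i^\xi=\sum_{\eta=1}^pu_i^\eta c^{-1}_{\eta\xi}$; from a state $\boldsymbol{x}(t)\in\{-1,+1\}^n$ compute $w_\xi(t)=f(\langle\boldsymbol{x}(t),\boldsymbol{u}^\xi\rangle/n)$,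 $a_i(t)=\sum_{\xi=1}^pw_\xi(t)v_i^\xi$, and set $x_i(t+1)=\mathrm{sgn}(a_i(t))$ if $a_i(t)\neq0$ and $x_i(t+1)=x_i(t)$ otherwise. If the solutions of the quadratic problems satisfy $0<\beta_i^\xi<\rho$ for all $i=1,\ldots,n$ and $\xi=1,\ldots,p$, then the RKAM coincides with the bipolar RPNN (their activation sums $\sum_\xi\beta_i^\xi u_i^\xi\kappa(\boldsymbol{u}^\xi,\boldsymbol{x})$ and $\sum_\xi w_\xi v_i^\xi$ agree for every state $\boldsymbol{x}$). Alternatively, the RKAM and the bipolar RPNN coincide if $0<v_i^\xi u_i^\xi<\rho$ for all $i=1,\ldots,n$ and $\xi=1,\ldots,p$.
   Context: $\langle\boldsymbol{x},\boldsymbol{y}\rangle=\sum_{i=1}^n x_iy_i$ for bipolar vectors $\boldsymbol{x},\boldsymbol{y}\in\{-1,+1\}^n$; $\mathrm{sgn}$ is the sign function. *)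

theory Defs
  imports "HOL-Analysis.Analysis"
begin

text \<open>Bipolar vectors in dimension n = CARD('n); components indexed by the finite type 'n.
  The inner product of real^'n is the sum of componentwise products.\<close>
definition bipolar :: "(real^'n) set" where
  "bipolar = {x. \<forall>i. x$i = -1 \<or> x$i = 1}"

definition psd_kernel :: "('a \<Rightarrow> 'a \<Rightarrow> real) \<Rightarrow> 'a set \<Rightarrow> bool" where
  "psd_kernel K S \<longleftrightarrow> (\<forall>(m::nat) (xs::nat \<Rightarrow> 'a) (c::nat \<Rightarrow> real).
      (\<forall>k<m. xs k \<in> S) \<longrightarrow> (\<Sum>k<m. \<Sum>l<m. c k * c l * K (xs k) (xs l)) \<ge> 0)"

definition kern :: "(real \<Rightarrow> real) \<Rightarrow> real^'n \<Rightarrow> real^'n \<Rightarrow> real" where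
  "kern f x y = f ((x \<bullet> y) / real CARD('n))"

definition gram :: "(real \<Rightarrow> real) \<Rightarrow> ('p::finite \<Rightarrow> real^'n) \<Rightarrow> real^'p^'p" where
  "gram f u = (\<chi> \<eta> \<xi>. f ((u \<xi> \<bullet> u \<eta>) / real CARD('n)))"

definition Qobj :: "(real \<Rightarrow> real) \<Rightarrow> ('p::finite \<Rightarrow> real^'n) \<Rightarrow> 'n \<Rightarrow> ('p \<Rightarrow> real) \<Rightarrow> real" where
  "Qobj f u i b = (1/2) * (\<Sum>\<xi>\<in>UNIV. \<Sum>\<eta>\<in>UNIV. b \<xi> * b \<eta> * (u \<xi>)$i * (u \<eta>)$i * kern f (u \<xi>) (u \<eta>))
                  - (\<Sum>\<xi>\<in>UNIV. b \<xi>)"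

definition box_feasible :: "real \<Rightarrow> ('p \<Rightarrow> real) \<Rightarrow> bool" where
  "box_feasible \<rho> b \<longleftrightarrow> (\<forall>\<xi>. 0 \<le> b \<xi> \<and> b \<xi> \<le> \<rho>)"

definition is_QP_solution :: "(real \<Rightarrow> real) \<Rightarrow> ('p::finite \<Rightarrow> real^'n) \<Rightarrow> real \<Rightarrow> 'n \<Rightarrow> ('p \<Rightarrow> real) \<Rightarrow> bool" where
  "is_QP_solution f u \<rho> i b \<longleftrightarrow> box_feasible \<rho> b \<and>
     (\<forall>\<gamma>. box_feasible \<rho> \<gamma> \<longrightarrow> Qobj f u i b \<le> Qobj f u i \<gamma>)"

definition rkam_act :: "(real \<Rightarrow> real) \<Rightarrow> ('p::finite \<Rightarrow> real^'n) \<Rightarrow> ('n \<Rightarrow> 'p \<Rightarrow> real) \<Rightarrow> 'n \<Rightarrow> real^'n \<Rightarrow> real" where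
  "rkam_act f u \<beta> i x = (\<Sum>\<xi>\<in>UNIV. \<beta> i \<xi> * (u \<xi>)$i * kern f (u \<xi>) x)"

definition rkam_step :: "(real \<Rightarrow> real) \<Rightarrow> ('p::finite \<Rightarrow> real^'n) \<Rightarrow> ('n \<Rightarrow> 'p \<Rightarrow> real) \<Rightarrow> real^'n \<Rightarrow> real^'n" where
  "rkam_step f u \<beta> x = (\<chi> i. sgn (rkam_act f u \<beta> i x))"

definition rpnn_v :: "(real \<Rightarrow> real) \<Rightarrow> ('p::finite \<Rightarrow> real^'n) \<Rightarrow> 'n \<Rightarrow> 'p \<Rightarrow> real" where
  "rpnn_v f u i \<xi> = (\<Sum>\<eta>\<in>UNIV. (u \<eta>)$i * matrix_inv (gram f u) $ \<eta> $ \<xi>)"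

definition rpnn_act :: "(real \<Rightarrow> real) \<Rightarrow> ('p::finite \<Rightarrow> real^'n) \<Rightarrow> 'n \<Rightarrow> real^'n \<Rightarrow> real" where
  "rpnn_act f u i x = (\<Sum>\<xi>\<in>UNIV. f ((x \<bullet> u \<xi>) / real CARD('n)) * rpnn_v f u i \<xi>)"

end

theory Submission
  imports Defs
begin


definition PF :: "('p::finite \<Rightarrow> 'p \<Rightarrow> real) \<Rightarrow> ('p \<Rightarrow> real) \<Rightarrow> real" where
  "PF H z = (\<Sum>a\<in>UNIV. \<Sum>b\<in>UNIV. z a * z b * H a b)"

lemma PF_add:
  assumes sym: "\<And>a b. H a b = H b a"
  shows "PF H (\<lambda>a. y a + d a) = PF H y + 2 * (\<Sum>a\<in>UNIV. d a * (\<Sum>b\<in>UNIV. H a b * y b)) + PF H d"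
proof -
  have e: "(\<Sum>a\<in>UNIV. \<Sum>b\<in>UNIV. y a * d b * H a b) = (\<Sum>a\<in>UNIV. d a * (\<Sum>b\<in>UNIV. H a b * y b))"
    apply (subst sum.swap)
    apply (simp add: sum_distrib_left)
    apply (rule sum.cong, simp, rule sum.cong, simp)
    by (simp add: sym mult.commute)
  have e2: "(\<Sum>a\<in>UNIV. \<Sum>b\<in>UNIV. d a * y b * H a b) = (\<Sum>a\<in>UNIV. d a * (\<Sum>b\<in>UNIV. H a b * y b))"
    apply (simp add: sum_distrib_left)
    apply (rule sum.cong, simp, rule sum.cong, simp)
    by (simp add: mult.commute)
  have "PF H (\<lambda>a. y a + d a) = (\<Sum>a\<in>UNIV. \<Sum>b\<in>UNIV. y a * y b * H a b + y a * d b * H a b + d a * y b * H a b + d a * d b * H a b)"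
    unfolding PF_def by (rule sum.cong, simp, rule sum.cong, simp, simp add: algebra_simps)
  also have "\<dots> = PF H y + (\<Sum>a\<in>UNIV. \<Sum>b\<in>UNIV. y a * d b * H a b) + (\<Sum>a\<in>UNIV. \<Sum>b\<in>UNIV. d a * y b * H a b) + PF H d"
    unfolding PF_def by (simp add: sum.distrib)
  finally show ?thesis using e e2 by simp
qed

lemma PF_scale: "PF H (\<lambda>a. t * z a) = t^2 * PF H z"
  unfolding PF_def by (simp add: sum_distrib_left power2_eq_square algebra_simps)

lemma lin_quad_zero:
  fixes g c \<delta> :: real
  assumes "\<delta> > 0" and h: "\<And>t. \<bar>t\<bar> < \<delta> \<Longrightarrow> t * g + t^2 * c \<ge> 0"
  shows "g = 0"
proof (rule ccontr)
  assume g: "g \<noteq> 0"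
  define s where "s = min (\<delta>/2) (\<bar>g\<bar> / (2 * (\<bar>c\<bar> + 1)))"
  have s0: "s > 0" using g assms(1) by (simp add: s_def)
  have s1: "s < \<delta>" using assms(1) by (simp add: s_def)
  have s2: "s * (\<bar>c\<bar> + 1) \<le> \<bar>g\<bar> / 2"
  proof -
    have "s \<le> \<bar>g\<bar> / (2 * (\<bar>c\<bar> + 1))" by (simp add: s_def)
    then show ?thesis by (simp add: field_simps)
  qed
  define t where "t = (if g > 0 then - s else s)"
  have "\<bar>t\<bar> < \<delta>" using s0 s1 by (simp add: t_def)
  then have "t * g + t^2 * c \<ge> 0" by (rule h)
  moreover have "t * g = - s * \<bar>g\<bar>" using g by (simp add: t_def)
  moreover have "t^2 = s^2" by (simp add: t_def)
  ultimately have "0 \<le> - s * \<bar>g\<bar> + s^2 * c" by simp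
  moreover have "s^2 * c \<le> s * (s * \<bar>c\<bar>)" using s0 by (simp add: power2_eq_square mult_left_mono)
  moreover have "s * (s * \<bar>c\<bar>) \<le> s * (\<bar>g\<bar>/2)" using s0 s2 by (intro mult_left_mono) (auto simp: algebra_simps)
  moreover have "s * \<bar>g\<bar> > 0" using s0 g by simp
  ultimately show False by (simp add: field_simps)
qed



lemma kern_sym: "kern f x y = kern f y x"
  unfolding kern_def by (simp add: inner_commute)

lemma Qobj_PF: "Qobj f u i b = (1/2) * PF (\<lambda>a c. (u a)$i * (u c)$i * kern f (u a) (u c)) b - (\<Sum>a\<in>UNIV. b a)"
  unfolding Qobj_def PF_def by (simp add: algebra_simps)

lemma Q_add:
  assumes sym: "\<And>a b. H a b = H b a"
  shows "(1/2) * PF H (\<lambda>a. y a + d a) - (\<Sum>a\<in>UNIV. y a + d a) =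
     ((1/2) * PF H y - (\<Sum>a\<in>UNIV. y a)) + (\<Sum>a\<in>UNIV. d a * ((\<Sum>b\<in>UNIV. H a b * y b) - 1)) + (1/2) * PF H d"
proof -
  have a: "(\<Sum>a\<in>UNIV. d a * ((\<Sum>b\<in>UNIV. H a b * y b) - 1)) = (\<Sum>a\<in>UNIV. d a * (\<Sum>b\<in>UNIV. H a b * y b)) - (\<Sum>a\<in>UNIV. d a)"
    by (simp add: right_diff_distrib sum_subtractf)
  have b: "(\<Sum>a\<in>UNIV. y a + d a) = (\<Sum>a\<in>UNIV. y a) + (\<Sum>a\<in>UNIV. d a)" by (rule sum.distrib)
  show ?thesis unfolding a b PF_add[of H y d, OF sym] by (simp add: algebra_simps)
qed

lemma psd_PF:
  fixes u :: "'p::finite \<Rightarrow> real^'n::finite"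
  assumes "psd_kernel (kern f) (bipolar :: (real^'n) set)" "\<forall>\<xi>. u \<xi> \<in> bipolar"
  shows "PF (\<lambda>a b. kern f (u a) (u b)) y \<ge> 0"
proof -
  obtain h where h: "bij_betw h {0..<card (UNIV::'p set)} (UNIV::'p set)"
    using ex_bij_betw_nat_finite[of "UNIV::'p set"] by auto
  let ?m = "card (UNIV::'p set)"
  have "(\<Sum>k<?m. \<Sum>l<?m. (y (h k)) * (y (h l)) * kern f (u (h k)) (u (h l))) \<ge> 0"
    using assms(1) assms(2) unfolding psd_kernel_def
    by (erule_tac x="?m" in allE, erule_tac x="\<lambda>k. u (h k)" in allE, erule_tac x="\<lambda>k. y (h k)" in allE) simp
  also have "(\<Sum>k<?m. \<Sum>l<?m. (y (h k)) * (y (h l)) * kern f (u (h k)) (u (h l)))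
     = PF (\<lambda>a b. kern f (u a) (u b)) y"
  proof -
    have r: "\<And>g. (\<Sum>k<?m. g (h k)) = (\<Sum>a\<in>UNIV. g a)"
      using sum.reindex_bij_betw[OF h] by (simp add: atLeast0LessThan)
    define G where "G a b = y a * y b * kern f (u a) (u b)" for a b
    have "(\<Sum>k<?m. \<Sum>l<?m. G (h k) (h l)) = (\<Sum>k<?m. \<Sum>b\<in>UNIV. G (h k) b)"
      by (rule sum.cong[OF refl], rule r)
    also have "\<dots> = (\<Sum>a\<in>UNIV. \<Sum>b\<in>UNIV. G a b)" by (rule r)
    finally show ?thesis unfolding PF_def G_def .
  qed
  finally show ?thesis .
qed

lemma psd_kernel_zero:
  assumes sym: "\<And>a b. K a b = K b a" and psd: "\<And>z. PF K z \<ge> 0" and y: "PF K y = 0"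
  shows "\<And>a. (\<Sum>b\<in>UNIV. K a b * y b) = 0"
proof -
  define w where "w a = (\<Sum>b\<in>UNIV. K a b * y b)" for a
  have "(\<Sum>a\<in>UNIV. w a * w a) = 0"
  proof (rule lin_quad_zero[of 1 _ "PF K w / 2"])
    fix t :: real
    have "0 \<le> PF K (\<lambda>a. y a + t * w a)" by (rule psd)
    also have "\<dots> = 2 * (t * (\<Sum>a\<in>UNIV. w a * w a) + t^2 * (PF K w / 2))"
      using PF_add[of K y "\<lambda>a. t * w a", OF sym] PF_scale[of K t w] y
    proof -
      have "PF K (\<lambda>a. y a + t * w a) = PF K y + 2 * (\<Sum>a\<in>UNIV. (t * w a) * w a) + PF K (\<lambda>a. t * w a)"
        using PF_add[of K y "\<lambda>a. t * w a", OF sym] by (simp add: w_def)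
      also have "(\<Sum>a\<in>UNIV. (t * w a) * w a) = t * (\<Sum>a\<in>UNIV. w a * w a)"
        by (simp add: sum_distrib_left mult.assoc)
      also note PF_scale
      finally show ?thesis using y by (simp add: algebra_simps)
    qed
    finally show "0 \<le> t * (\<Sum>a\<in>UNIV. w a * w a) + t^2 * (PF K w / 2)" by simp
  qed simp
  then have "\<forall>a\<in>UNIV. w a * w a = 0" by (subst sum_nonneg_eq_0_iff[symmetric]) auto
  then show "\<And>a. (\<Sum>b\<in>UNIV. K a b * y b) = 0" by (simp add: w_def[symmetric])
qed

lemma inv_facts:
  assumes "invertible (A::real^'n^'n)"
  shows "A ** matrix_inv A = mat 1" "matrix_inv A ** A = mat 1"
proof -
  have "\<exists>A'. A ** A' = mat 1 \<and> A' ** A = mat 1" using assms unfolding invertible_def by blast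
  then have "A ** matrix_inv A = mat 1 \<and> matrix_inv A ** A = mat 1"
    unfolding matrix_inv_def by (rule someI_ex)
  then show "A ** matrix_inv A = mat 1" "matrix_inv A ** A = mat 1" by auto
qed

lemma mat_entry:
  assumes "(A::real^'n^'n) ** B = mat 1"
  shows "(\<Sum>k\<in>UNIV. A$a$k * B$k$b) = (if a = b then 1 else 0)"
proof -
  have "(A ** B)$a$b = mat 1 $ a $ b" using assms by simp
  then show ?thesis by (simp add: matrix_matrix_mult_def mat_def)
qed

lemma l1: fixes X :: "'p::finite \<Rightarrow> real"
  shows "(\<Sum>c\<in>UNIV. (t * (if c = a then 1 else 0)) * X c) = t * X a"
proof -
  have eq: "(\<lambda>c. (t * (if c = a then 1 else 0)) * X c) = (\<lambda>c. if c = a then t * X a else 0)" by auto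
  show ?thesis unfolding eq by simp
qed
lemma l2: fixes H :: "'p::finite \<Rightarrow> 'p \<Rightarrow> real"
  shows "(\<Sum>c\<in>UNIV. \<Sum>d\<in>UNIV. (if c = a then 1 else 0) * (if d = a then 1 else 0) * H c d) = H a a"
proof -
  have eq2: "(\<lambda>c. \<Sum>d\<in>UNIV. (if c = a then 1 else 0) * (if d = a then 1 else 0) * H c d) = (\<lambda>c. if c = a then H a a else 0)"
  proof
    fix c
    have eq: "(\<lambda>d. (if c = a then 1 else 0) * (if d = a then 1 else 0) * H c d) = (\<lambda>d. if d = a then (if c = a then H a a else 0) else 0)" by auto
    show "(\<Sum>d\<in>UNIV. (if c = a then 1 else 0) * (if d = a then 1 else 0) * H c d) = (if c = a then H a a else 0)" unfolding eq by simp
  qed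
  show ?thesis unfolding eq2 by simp
qed

lemma interior_stationary:
  fixes u :: "'p::finite \<Rightarrow> real^'n::finite"
  assumes sol: "is_QP_solution f u \<rho> i b" and int: "\<And>a. 0 < b a \<and> b a < \<rho>"
  shows "(\<Sum>c\<in>UNIV. ((u a)$i * (u c)$i * kern f (u a) (u c)) * b c) = 1"
proof -
  define H where "H a c = (u a)$i * (u c)$i * kern f (u a) (u c)" for a c
  have sym: "\<And>a c. H a c = H c a" unfolding H_def by (simp add: kern_sym mult.commute)
  define \<delta> where "\<delta> = min (b a) (\<rho> - b a)"
  have d0: "\<delta> > 0" using int[of a] by (simp add: \<delta>_def)
  define e where "e c = (if c = a then 1 else (0::real))" for c
  have "(\<Sum>c\<in>UNIV. H a c * b c) - 1 = 0"
  proof (rule lin_quad_zero[OF d0])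
    fix t :: real assume t: "\<bar>t\<bar> < \<delta>"
    have feas: "box_feasible \<rho> (\<lambda>c. b c + t * e c)"
      unfolding box_feasible_def
    proof
      fix c show "0 \<le> b c + t * e c \<and> b c + t * e c \<le> \<rho>"
        using int[of c] t by (auto simp: e_def \<delta>_def)
    qed
    have "Qobj f u i b \<le> Qobj f u i (\<lambda>c. b c + t * e c)"
      using sol feas unfolding is_QP_solution_def by blast
    also have "Qobj f u i (\<lambda>c. b c + t * e c) = Qobj f u i b + (\<Sum>c\<in>UNIV. (t * e c) * ((\<Sum>d\<in>UNIV. H c d * b d) - 1)) + (1/2) * PF H (\<lambda>c. t * e c)"
      unfolding Qobj_PF H_def[symmetric] by (rule Q_add[OF sym])
    also have "(\<Sum>c\<in>UNIV. (t * e c) * ((\<Sum>d\<in>UNIV. H c d * b d) - 1)) = t * ((\<Sum>d\<in>UNIV. H a d * b d) - 1)"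
      unfolding e_def by (rule l1)
    also have "PF H (\<lambda>c. t * e c) = t^2 * H a a"
      unfolding PF_scale PF_def e_def l2 ..
    finally show "0 \<le> t * ((\<Sum>c\<in>UNIV. H a c * b c) - 1) + t\<^sup>2 * (H a a / 2)" by simp
  qed
  then show ?thesis unfolding H_def by simp
qed



lemma gram_entry: "gram f u $ a $ b = kern f (u b) (u a)"
  by (simp add: gram_def kern_def)

lemma bip_sq: "x \<in> bipolar \<Longrightarrow> x $ i * x $ i = 1"
  unfolding bipolar_def mem_Collect_eq by (drule spec[of _ i]) auto

lemma sum_swap_mult:
  fixes A :: "'p::finite \<Rightarrow> 'q::finite \<Rightarrow> real"
  shows "(\<Sum>c\<in>UNIV. (\<Sum>k\<in>UNIV. A k c) * y c) = (\<Sum>k\<in>UNIV. \<Sum>c\<in>UNIV. A k c * y c)"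
  unfolding sum_distrib_right by (rule sum.swap)

lemma kernel_trivial:
  fixes u :: "'p::finite \<Rightarrow> real^'n::finite"
  assumes inv: "invertible (gram f u)"
    and ker: "\<And>a. (\<Sum>c\<in>UNIV. kern f (u a) (u c) * y c) = 0"
  shows "y z = 0"
proof -
  let ?C = "gram f u" let ?M = "matrix_inv (gram f u)"
  have me: "\<And>c. (\<Sum>k\<in>UNIV. ?M$z$k * ?C$k$c) = (if z = c then 1 else 0)"
    using mat_entry[OF inv_facts(2)[OF inv]] by blast
  have eqd: "(\<lambda>c. (if z = c then 1 else 0) * y c) = (\<lambda>c. if c = z then y z else 0)" by auto
  have "y z = (\<Sum>c\<in>UNIV. (if z = c then 1 else 0) * y c)" unfolding eqd by simp
  also have "\<dots> = (\<Sum>c\<in>UNIV. (\<Sum>k\<in>UNIV. ?M$z$k * ?C$k$c) * y c)" by (simp only: me)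
  also have "\<dots> = (\<Sum>k\<in>UNIV. \<Sum>c\<in>UNIV. ?M$z$k * ?C$k$c * y c)" by (rule sum_swap_mult)
  also have "\<dots> = (\<Sum>k\<in>UNIV. ?M$z$k * (\<Sum>c\<in>UNIV. kern f (u k) (u c) * y c))"
  proof (rule sum.cong[OF refl])
    fix k
    have gk: "\<And>c. ?C$k$c = kern f (u k) (u c)" using gram_entry kern_sym by metis
    show "(\<Sum>c\<in>UNIV. ?M$z$k * ?C$k$c * y c) = ?M$z$k * (\<Sum>c\<in>UNIV. kern f (u k) (u c) * y c)"
      unfolding gk sum_distrib_left mult.assoc ..
  qed
  also have "\<dots> = 0" by (simp add: ker)
  finally show ?thesis .
qed

lemma unique_min:
  fixes u :: "'p::finite \<Rightarrow> real^'n::finite"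
  assumes psd: "psd_kernel (kern f) (bipolar :: (real^'n) set)" and bip: "\<forall>\<xi>. u \<xi> \<in> bipolar"
    and inv: "invertible (gram f u)"
    and sol: "is_QP_solution f u \<rho> i \<beta>" and feas: "box_feasible \<rho> b"
    and stat: "\<And>a. (\<Sum>c\<in>UNIV. ((u a)$i * (u c)$i * kern f (u a) (u c)) * b c) = 1"
  shows "\<beta> = b"
proof -
  define H where "H a c = (u a)$i * (u c)$i * kern f (u a) (u c)" for a c
  have sym: "\<And>a c. H a c = H c a" unfolding H_def by (simp add: kern_sym mult.commute)
  define d where "d c = \<beta> c - b c" for c
  have bd: "\<beta> = (\<lambda>c. b c + d c)" by (simp add: d_def)
  have e1: "Qobj f u i (\<lambda>c. b c + d c) = Qobj f u i b + (\<Sum>c\<in>UNIV. d c * ((\<Sum>e\<in>UNIV. H c e * b e) - 1)) + (1/2) * PF H d"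
    unfolding Qobj_PF H_def[symmetric] by (rule Q_add[OF sym])
  have e2: "(\<Sum>c\<in>UNIV. d c * ((\<Sum>e\<in>UNIV. H c e * b e) - 1)) = 0"
    using stat by (simp add: H_def)
  have "Qobj f u i \<beta> \<le> Qobj f u i b" using sol feas unfolding is_QP_solution_def by blast
  then have "Qobj f u i (\<lambda>c. b c + d c) \<le> Qobj f u i b" using bd by simp
  then have "Qobj f u i b + (1/2) * PF H d \<le> Qobj f u i b" using e1 e2 by simp
  then have le: "PF H d \<le> 0" by simp
  define y where "y c = d c * (u c)$i" for c
  have "PF H d = PF (\<lambda>a c. kern f (u a) (u c)) y"
    unfolding PF_def H_def y_def by (rule sum.cong[OF refl], rule sum.cong[OF refl]) (simp add: mult.commute mult.left_commute)
  moreover have "PF (\<lambda>a c. kern f (u a) (u c)) y \<ge> 0" by (rule psd_PF[OF psd bip])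
  ultimately have z: "PF (\<lambda>a c. kern f (u a) (u c)) y = 0" using le by simp
  have ker: "\<And>a. (\<Sum>c\<in>UNIV. kern f (u a) (u c) * y c) = 0"
    by (rule psd_kernel_zero[of "\<lambda>a c. kern f (u a) (u c)", OF _ _ z]) (auto simp: kern_sym intro: psd_PF[OF psd bip])
  show ?thesis
  proof
    fix z
    have "y z = 0" by (rule kernel_trivial[OF inv ker])
    moreover have "(u z)$i * (u z)$i = 1" using bip bip_sq by blast
    ultimately have "d z = 0"
    proof -
      assume a1: "y z = 0" and a2: "(u z)$i * (u z)$i = 1"
      have "d z = d z * ((u z)$i * (u z)$i)" using a2 by simp
      also have "\<dots> = y z * (u z)$i" unfolding y_def by (simp only: mult.assoc)
      finally show ?thesis using a1 by simp
    qed
    then show "\<beta> z = b z" by (simp add: d_def)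
  qed
qed



lemma delta_sum:
  fixes X :: "'p::finite \<Rightarrow> real"
  shows "(\<Sum>c\<in>UNIV. X c * (if c = a then 1 else 0)) = X a"
proof -
  have eq: "(\<lambda>c. X c * (if c = a then 1 else 0)) = (\<lambda>c. if c = a then X a else 0)" by auto
  show ?thesis unfolding eq by simp
qed

lemma gram_kern: "gram f u $ k $ c = kern f (u k) (u c)"
  using gram_entry kern_sym by metis

lemma part1_coef:
  fixes u :: "'p::finite \<Rightarrow> real^'n::finite"
  assumes bip: "\<forall>\<xi>. u \<xi> \<in> bipolar" and inv: "invertible (gram f u)"
    and stat: "\<And>a. (\<Sum>c\<in>UNIV. ((u a)$i * (u c)$i * kern f (u a) (u c)) * b c) = 1"
  shows "b \<xi> * (u \<xi>)$i = rpnn_v f u i \<xi>"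
proof -
  let ?C = "gram f u" let ?M = "matrix_inv (gram f u)"
  have s: "(\<Sum>c\<in>UNIV. kern f (u a) (u c) * ((u c)$i * b c)) = (u a)$i" for a
  proof -
    have sq: "(u a)$i * (u a)$i = 1" using bip bip_sq by blast
    have "(u a)$i = (u a)$i * (\<Sum>c\<in>UNIV. ((u a)$i * (u c)$i * kern f (u a) (u c)) * b c)"
      using stat[of a] by simp
    also have "\<dots> = (\<Sum>c\<in>UNIV. ((u a)$i * (u a)$i) * (kern f (u a) (u c) * ((u c)$i * b c)))"
      unfolding sum_distrib_left by (rule sum.cong[OF refl]) (simp only: mult.assoc mult.left_commute)
    also have "\<dots> = (\<Sum>c\<in>UNIV. kern f (u a) (u c) * ((u c)$i * b c))" unfolding sq by simp
    finally show ?thesis by simp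
  qed
  have me: "\<And>c. (\<Sum>k\<in>UNIV. ?C$c$k * ?M$k$\<xi>) = (if c = \<xi> then 1 else 0)"
    using mat_entry[OF inv_facts(1)[OF inv]] by blast
  have "rpnn_v f u i \<xi> = (\<Sum>\<eta>\<in>UNIV. (\<Sum>c\<in>UNIV. kern f (u \<eta>) (u c) * ((u c)$i * b c)) * ?M$\<eta>$\<xi>)"
    unfolding rpnn_v_def s ..
  also have "\<dots> = (\<Sum>\<eta>\<in>UNIV. \<Sum>c\<in>UNIV. ((u c)$i * b c) * (?C$c$\<eta> * ?M$\<eta>$\<xi>))"
    unfolding sum_distrib_right gram_kern
    apply (rule sum.cong[OF refl], rule sum.cong[OF refl])
    apply (subst kern_sym)
    apply (simp only: ac_simps)
    done
  also have "\<dots> = (\<Sum>c\<in>UNIV. \<Sum>\<eta>\<in>UNIV. ((u c)$i * b c) * (?C$c$\<eta> * ?M$\<eta>$\<xi>))"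
    by (rule sum.swap)
  also have "\<dots> = (\<Sum>c\<in>UNIV. ((u c)$i * b c) * (if c = \<xi> then 1 else 0))"
    unfolding sum_distrib_left[symmetric] me ..
  also have "\<dots> = (u \<xi>)$i * b \<xi>" by (rule delta_sum)
  finally show ?thesis by simp
qed

lemma part2_stat:
  fixes u :: "'p::finite \<Rightarrow> real^'n::finite"
  assumes bip: "\<forall>\<xi>. u \<xi> \<in> bipolar" and inv: "invertible (gram f u)"
  shows "(\<Sum>c\<in>UNIV. ((u a)$i * (u c)$i * kern f (u a) (u c)) * (rpnn_v f u i c * (u c)$i)) = 1"
proof -
  let ?C = "gram f u" let ?M = "matrix_inv (gram f u)"
  have sq: "\<And>a. (u a)$i * (u a)$i = 1" using bip bip_sq by blast
  have me: "\<And>z. (\<Sum>c\<in>UNIV. ?M$z$c * ?C$c$a) = (if z = a then 1 else 0)"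
    using mat_entry[OF inv_facts(2)[OF inv]] by blast
  have "(\<Sum>c\<in>UNIV. ((u a)$i * (u c)$i * kern f (u a) (u c)) * (rpnn_v f u i c * (u c)$i))
      = (\<Sum>c\<in>UNIV. (u a)$i * (kern f (u a) (u c) * rpnn_v f u i c) * ((u c)$i * (u c)$i))"
    by (rule sum.cong[OF refl]) (simp only: mult.assoc mult.commute mult.left_commute)
  also have "\<dots> = (u a)$i * (\<Sum>c\<in>UNIV. kern f (u a) (u c) * rpnn_v f u i c)"
    unfolding sq sum_distrib_left by simp
  also have "(\<Sum>c\<in>UNIV. kern f (u a) (u c) * rpnn_v f u i c)
      = (\<Sum>c\<in>UNIV. \<Sum>z\<in>UNIV. (u z)$i * (?M$z$c * ?C$c$a))"
    unfolding rpnn_v_def sum_distrib_left gram_kern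
    apply (rule sum.cong[OF refl], rule sum.cong[OF refl])
    apply (subst kern_sym)
    apply (simp only: ac_simps)
    done
  also have "\<dots> = (\<Sum>z\<in>UNIV. \<Sum>c\<in>UNIV. (u z)$i * (?M$z$c * ?C$c$a))" by (rule sum.swap)
  also have "\<dots> = (\<Sum>z\<in>UNIV. (u z)$i * (if z = a then 1 else 0))"
    unfolding sum_distrib_left[symmetric] me ..
  also have "\<dots> = (u a)$i" by (rule delta_sum)
  finally show ?thesis using sq by simp
qed

lemma act_eq:
  fixes u :: "'p::finite \<Rightarrow> real^'n::finite"
  assumes "\<And>\<xi>. \<beta> i \<xi> * (u \<xi>)$i = rpnn_v f u i \<xi>"
  shows "rkam_act f u \<beta> i x = rpnn_act f u i x"
  unfolding rkam_act_def rpnn_act_def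
proof (rule sum.cong[OF refl])
  fix \<xi> :: 'p
  have k: "kern f (u \<xi>) x = f ((x \<bullet> u \<xi>) / real CARD('n))"
    unfolding kern_def inner_commute[of "u \<xi>" x] ..
  show "\<beta> i \<xi> * (u \<xi>)$i * kern f (u \<xi>) x = f ((x \<bullet> u \<xi>) / real CARD('n)) * rpnn_v f u i \<xi>"
    unfolding k assms by (rule mult.commute)
qed

theorem theorem3:
  fixes f :: "real \<Rightarrow> real"
    and u :: "'p::finite \<Rightarrow> real^'n::finite"
    and \<rho> :: real
    and \<beta> :: "'n \<Rightarrow> 'p \<Rightarrow> real"
  assumes "continuous_on {-1..1} f"
    and "mono_on {-1..1} f"
    and "psd_kernel (kern f) (bipolar :: (real^'n) set)"
    and "\<forall>\<xi>. u \<xi> \<in> bipolar"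
    and "invertible (gram f u)"
    and "\<rho> > 0"
    and "\<forall>i. is_QP_solution f u \<rho> i (\<beta> i)"
  shows "((\<forall>i \<xi>. 0 < \<beta> i \<xi> \<and> \<beta> i \<xi> < \<rho>) \<longrightarrow>
            (\<forall>i. \<forall>x\<in>bipolar. rkam_act f u \<beta> i x = rpnn_act f u i x))
       \<and> ((\<forall>i \<xi>. 0 < rpnn_v f u i \<xi> * (u \<xi>)$i \<and> rpnn_v f u i \<xi> * (u \<xi>)$i < \<rho>) \<longrightarrow>
            (\<forall>i. \<forall>x\<in>bipolar. rkam_act f u \<beta> i x = rpnn_act f u i x))"
proof (intro conjI impI allI ballI)
  fix i x
  assume int: "\<forall>i \<xi>. 0 < \<beta> i \<xi> \<and> \<beta> i \<xi> < \<rho>"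
  have stat: "\<And>a. (\<Sum>c\<in>UNIV. ((u a)$i * (u c)$i * kern f (u a) (u c)) * \<beta> i c) = 1"
    by (rule interior_stationary[of f u \<rho> i]) (use assms(7) int in auto)
  show "rkam_act f u \<beta> i x = rpnn_act f u i x"
    by (rule act_eq, rule part1_coef[OF assms(4) assms(5) stat])
next
  fix i x
  assume h: "\<forall>i \<xi>. 0 < rpnn_v f u i \<xi> * (u \<xi>)$i \<and> rpnn_v f u i \<xi> * (u \<xi>)$i < \<rho>"
  have feas: "box_feasible \<rho> (\<lambda>c. rpnn_v f u i c * (u c)$i)"
    unfolding box_feasible_def using h by (simp add: less_imp_le)
  have bi: "\<beta> i = (\<lambda>c. rpnn_v f u i c * (u c)$i)"
    by (rule unique_min[OF assms(3) assms(4) assms(5) _ feas part2_stat[OF assms(4) assms(5)]])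
       (use assms(7) in blast)
  then have "\<And>\<xi>. \<beta> i \<xi> * (u \<xi>)$i = rpnn_v f u i \<xi>"
  proof -
    fix \<xi>
    have sq: "(u \<xi>)$i * (u \<xi>)$i = 1" using assms(4) bip_sq by blast
    have "\<beta> i \<xi> = rpnn_v f u i \<xi> * (u \<xi>)$i" using bi by (rule fun_cong)
    then have "\<beta> i \<xi> * (u \<xi>)$i = rpnn_v f u i \<xi> * ((u \<xi>)$i * (u \<xi>)$i)" by (simp only: mult.assoc)
    then show "\<beta> i \<xi> * (u \<xi>)$i = rpnn_v f u i \<xi>" unfolding sq by (simp only: mult_1_right)
  qed
  then show "rkam_act f u \<beta> i x = rpnn_act f u i x" by (rule act_eq)
qed

end
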